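(* Let ${\bm X},{\bm Y}$ be finite sets with $n=|{\bm X}|$, $m=|{\bm Y}|$, let $m^{\bm X}_\bullet,m^{\bm Y}_\bullet$ be Markov transition kernels on them, $C\in\mathbb{R}_+^{n\times m}$ a cost matrix, $\delta\in(0,1]$ and $\epsilon\ge0$. Define $C^{\epsilon,\delta,(0)}=C$ and $C^{\epsilon,\delta,(l)}_{ij}=\delta C_{ij}+(1-\delta)d^\epsilon_{\mathrm W}(m^{\bm X}_i,m^{\bm Y}_j;C^{\epsilon,\delta,(l-1)})$ for $l\ge1$. Then $C^{\epsilon,\delta,(k)}$ converges as $k\to\infty$ to the unique fixed point $C^{\epsilon,\delta,(\infty)}$ of the map $D\mapsto\big(\delta C_{ij}+(1-\delta)d^\epsilon_{\mathrm W}(m^{\bm X}_i,m^{\bm Y}_j;D)\big)_{i,j}$, and for all $k$, $$\|C^{\epsilon,\delta,(k)}-C^{\epsilon,\delta,(\infty)}\|_\infty\le\frac{(1-\delta)^k}{\delta}\big(2\|C\|_\infty+\epsilon\log(nm)\big).$$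
   Context: For $\alpha\in\mathcal{P}({\bm X}),\beta\in\mathcal{P}({\bm Y})$, cost $D$ and $\epsilon\ge0$, $d^{\epsilon}_{\mathrm W}(\alpha,\beta;D)=\min_{P\in\mathcal{C}(\alpha,\beta)}\sum_{i,j}P_{ij}D_{ij}+\epsilon\sum_{i,j}P_{ij}\log P_{ij}$, with $\mathcal{C}(\alpha,\beta)$ the set of couplings. $\|\cdot\|_\infty$ is the entrywise max norm. *)

theory Defs
  imports "HOL-Analysis.Analysis"
begin

text \<open>Probability vectors on a finite type, couplings, and the entropic Wasserstein
  distance d^eps_W(alpha,beta;D) = min over couplings of sum P D + eps sum P log P
  (with the convention 0 log 0 = 0, automatic since 0 * ln 0 = 0).\<close>

definition is_prob :: "('a::finite \<Rightarrow> real) \<Rightarrow> bool" where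
  "is_prob \<alpha> \<longleftrightarrow> (\<forall>i. \<alpha> i \<ge> 0) \<and> (\<Sum>i\<in>UNIV. \<alpha> i) = 1"

definition couplings :: "('a::finite \<Rightarrow> real) \<Rightarrow> ('b::finite \<Rightarrow> real) \<Rightarrow> ('a \<Rightarrow> 'b \<Rightarrow> real) set" where
  "couplings \<alpha> \<beta> = {P. (\<forall>i j. P i j \<ge> 0) \<and> (\<forall>i. (\<Sum>j\<in>UNIV. P i j) = \<alpha> i) \<and> (\<forall>j. (\<Sum>i\<in>UNIV. P i j) = \<beta> j)}"

definition ot_objective :: "real \<Rightarrow> ('a::finite \<Rightarrow> 'b::finite \<Rightarrow> real) \<Rightarrow> ('a \<Rightarrow> 'b \<Rightarrow> real) \<Rightarrow> real" where
  "ot_objective \<epsilon> D P = (\<Sum>i\<in>UNIV. \<Sum>j\<in>UNIV. P i j * D i j) + \<epsilon> * (\<Sum>i\<in>UNIV. \<Sum>j\<in>UNIV. P i j * ln (P i j))"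

text \<open>The minimum over the (compact, nonempty) coupling polytope of a continuous
  function; written as an infimum, which is attained.\<close>
definition dW :: "real \<Rightarrow> ('a::finite \<Rightarrow> real) \<Rightarrow> ('b::finite \<Rightarrow> real) \<Rightarrow> ('a \<Rightarrow> 'b \<Rightarrow> real) \<Rightarrow> real" where
  "dW \<epsilon> \<alpha> \<beta> D = Inf (ot_objective \<epsilon> D ` couplings \<alpha> \<beta>)"

definition maxnorm :: "('a::finite \<Rightarrow> 'b::finite \<Rightarrow> real) \<Rightarrow> real" where
  "maxnorm A = Max {\<bar>A i j\<bar> | i j. True}"

definition wl_update :: "real \<Rightarrow> real \<Rightarrow> ('a::finite \<Rightarrow> 'a \<Rightarrow> real) \<Rightarrow> ('b::finite \<Rightarrow> 'b \<Rightarrow> real)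
    \<Rightarrow> ('a \<Rightarrow> 'b \<Rightarrow> real) \<Rightarrow> ('a \<Rightarrow> 'b \<Rightarrow> real) \<Rightarrow> ('a \<Rightarrow> 'b \<Rightarrow> real)" where
  "wl_update \<epsilon> \<delta> mX mY C D = (\<lambda>i j. \<delta> * C i j + (1 - \<delta>) * dW \<epsilon> (mX i) (mY j) D)"

end

theory Submission
  imports Defs
begin
lemma fun_tendsto:
  fixes f :: "'n \<Rightarrow> 'a \<Rightarrow> 'c::topological_space"
  assumes "\<And>i. ((\<lambda>k. f k i) \<longlongrightarrow> l i) F" shows "(f \<longlongrightarrow> l) F"
proof -
  have "limitin (product_topology (\<lambda>i. euclidean) UNIV) f l F"
    unfolding limitin_componentwise using assms by (simp add: limitin_canonical_iff)
  then show ?thesis by (simp add: euclidean_product_topology limitin_canonical_iff)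
qed
lemma ent:
  assumes "finite S" "\<And>x. x \<in> S \<Longrightarrow> p x \<ge> 0" "sum p S = 1"
  shows "(\<Sum>x\<in>S. p x * ln (p x)) \<ge> - ln (real (card S))"
proof -
  define N where "N = real (card S)"
  have "S \<noteq> {}" using assms by auto
  then have N: "N > 0" using assms(1) by (simp add: N_def card_gt_0_iff)
  have pt: "p x * ln (p x) \<ge> - p x * ln N + p x - 1 / N" if "x \<in> S" for x
  proof (cases "p x = 0")
    case True then show ?thesis using N by simp
  next
    case False
    then have px: "p x > 0" using assms(2)[OF that] by simp
    have "ln (1 / (p x * N)) \<le> 1 / (p x * N) - 1" using px N by (intro ln_le_minus_one) simp
    then have "ln (p x) + ln N \<ge> 1 - 1 / (p x * N)" using px N by (simp add: ln_div ln_mult)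
    then have "p x * (ln (p x) + ln N) \<ge> p x * (1 - 1 / (p x * N))" using px
      by (intro mult_left_mono) auto
    moreover have "p x * (1 - 1 / (p x * N)) = p x - 1 / N" using px N by (simp add: field_simps)
    ultimately show ?thesis by (simp add: algebra_simps)
  qed
  have "(\<Sum>x\<in>S. p x * ln (p x)) \<ge> (\<Sum>x\<in>S. - p x * ln N + p x - 1 / N)"
    using pt by (intro sum_mono) auto
  also have "(\<Sum>x\<in>S. - p x * ln N + p x - 1 / N) = - ln N"
    using assms(3) N by (simp add: sum.distrib sum_subtractf sum_distrib_right[symmetric] N_def)
  finally show ?thesis by (simp add: N_def)
qed

lemma maxnorm_ge: "\<bar>A i j\<bar> \<le> maxnorm A"
proof -
  have "{\<bar>A i j\<bar> | i j. True} = (\<lambda>(i,j). \<bar>A i j\<bar>) ` UNIV" by auto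
  then have "finite {\<bar>A i j\<bar> | i j. True}" by simp
  then show ?thesis unfolding maxnorm_def by (intro Max_ge) auto
qed

lemma maxnorm_le: "(\<And>i j. \<bar>A i j\<bar> \<le> b) \<Longrightarrow> maxnorm A \<le> b"
proof -
  assume a: "\<And>i j. \<bar>A i j\<bar> \<le> b"
  have "{\<bar>A i j\<bar> | i j. True} = (\<lambda>(i,j). \<bar>A i j\<bar>) ` UNIV" by auto
  then have "finite {\<bar>A i j\<bar> | i j. True}" by simp
  then show ?thesis unfolding maxnorm_def using a by (subst Max_le_iff) auto
qed

lemma maxnorm_nonneg: "maxnorm A \<ge> 0"
  using maxnorm_ge[of A undefined undefined] by linarith

lemma coupling_mass:
  assumes "P \<in> couplings \<alpha> \<beta>" "is_prob \<alpha>"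
  shows "(\<Sum>i\<in>UNIV. \<Sum>j\<in>UNIV. P i j) = 1"
  using assms unfolding couplings_def is_prob_def by simp

lemma coupling_lin:
  assumes "P \<in> couplings \<alpha> \<beta>" "is_prob \<alpha>"
  shows "\<bar>\<Sum>i\<in>UNIV. \<Sum>j\<in>UNIV. P i j * A i j\<bar> \<le> maxnorm A"
proof -
  have P0: "\<And>i j. P i j \<ge> 0" using assms unfolding couplings_def by auto
  have "\<bar>\<Sum>i\<in>UNIV. \<Sum>j\<in>UNIV. P i j * A i j\<bar> \<le> (\<Sum>i\<in>UNIV. \<bar>\<Sum>j\<in>UNIV. P i j * A i j\<bar>)"
    by (rule sum_abs)
  also have "\<dots> \<le> (\<Sum>i\<in>UNIV. \<Sum>j\<in>UNIV. \<bar>P i j * A i j\<bar>)"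
    by (intro sum_mono sum_abs)
  also have "\<dots> \<le> (\<Sum>i\<in>UNIV. \<Sum>j\<in>UNIV. P i j * maxnorm A)"
    using P0 by (intro sum_mono) (simp add: abs_mult maxnorm_ge mult_left_mono)
  also have "\<dots> = maxnorm A"
    using coupling_mass[OF assms] by (simp add: sum_distrib_right[symmetric])
  finally show ?thesis .
qed

lemma coupling_ent:
  fixes P :: "'x::finite \<Rightarrow> 'y::finite \<Rightarrow> real"
  assumes "P \<in> couplings \<alpha> \<beta>" "is_prob \<alpha>"
  shows "(\<Sum>i\<in>UNIV. \<Sum>j\<in>UNIV. P i j * ln (P i j)) \<ge> - ln (real (CARD('x) * CARD('y)))"
proof -
  have P0: "\<And>i j. P i j \<ge> 0" using assms unfolding couplings_def by auto
  have e: "\<And>f. (\<Sum>i\<in>(UNIV::'x set). \<Sum>j\<in>(UNIV::'y set). f i j) = (\<Sum>x\<in>UNIV. case_prod f x)"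
    by (simp add: sum.cartesian_product)
  have "(\<Sum>x\<in>UNIV. case_prod P x) = 1" using coupling_mass[OF assms] e by metis
  then have "(\<Sum>x\<in>UNIV. case_prod P x * ln (case_prod P x)) \<ge> - ln (real (card (UNIV::('x\<times>'y) set)))"
    using P0 by (intro ent) auto
  moreover have "card (UNIV::('x\<times>'y) set) = CARD('x) * CARD('y)" by (metis UNIV_Times_UNIV card_cartesian_product)
  ultimately show ?thesis using e[of "\<lambda>i j. P i j * ln (P i j)"] by (simp add: case_prod_beta')
qed

lemma prod_coupling:
  assumes "is_prob \<alpha>" "is_prob \<beta>"
  shows "(\<lambda>i j. \<alpha> i * \<beta> j) \<in> couplings \<alpha> \<beta>"
  using assms unfolding couplings_def is_prob_def
  by (simp add: sum_distrib_left[symmetric] sum_distrib_right[symmetric])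

lemma obj_lower:
  fixes P :: "'x::finite \<Rightarrow> 'y::finite \<Rightarrow> real"
  assumes "P \<in> couplings \<alpha> \<beta>" "is_prob \<alpha>" "\<epsilon> \<ge> 0"
  shows "ot_objective \<epsilon> D P \<ge> - maxnorm D - \<epsilon> * ln (real (CARD('x) * CARD('y)))"
proof -
  have "\<epsilon> * (\<Sum>i\<in>UNIV. \<Sum>j\<in>UNIV. P i j * ln (P i j)) \<ge> \<epsilon> * (- ln (real (CARD('x) * CARD('y))))"
    using coupling_ent[OF assms(1,2)] assms(3) by (intro mult_left_mono) auto
  then show ?thesis using coupling_lin[OF assms(1,2), of D] unfolding ot_objective_def by linarith
qed

lemma dW_facts:
  fixes \<alpha> :: "'x::finite \<Rightarrow> real" and \<beta> :: "'y::finite \<Rightarrow> real"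
  assumes "is_prob \<alpha>" "is_prob \<beta>" "\<epsilon> \<ge> 0"
  shows "couplings \<alpha> \<beta> \<noteq> {}" and "bdd_below (ot_objective \<epsilon> D ` couplings \<alpha> \<beta>)"
    and "\<And>P. P \<in> couplings \<alpha> \<beta> \<Longrightarrow> dW \<epsilon> \<alpha> \<beta> D \<le> ot_objective \<epsilon> D P"
proof -
  show "couplings \<alpha> \<beta> \<noteq> {}" using prod_coupling[OF assms(1,2)] by auto
  show b: "bdd_below (ot_objective \<epsilon> D ` couplings \<alpha> \<beta>)"
    unfolding bdd_below_def using obj_lower[OF _ assms(1,3)] by blast
  show "\<And>P. P \<in> couplings \<alpha> \<beta> \<Longrightarrow> dW \<epsilon> \<alpha> \<beta> D \<le> ot_objective \<epsilon> D P"
    unfolding dW_def using b by (intro cINF_lower)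
qed

lemma dW_lip:
  fixes \<alpha> :: "'x::finite \<Rightarrow> real" and \<beta> :: "'y::finite \<Rightarrow> real"
  assumes "is_prob \<alpha>" "is_prob \<beta>" "\<epsilon> \<ge> 0"
  shows "dW \<epsilon> \<alpha> \<beta> D \<le> dW \<epsilon> \<alpha> \<beta> D' + maxnorm (\<lambda>i j. D i j - D' i j)"
proof -
  have "dW \<epsilon> \<alpha> \<beta> D - maxnorm (\<lambda>i j. D i j - D' i j) \<le> dW \<epsilon> \<alpha> \<beta> D'"
    unfolding dW_def[of \<epsilon> \<alpha> \<beta> D']
  proof (rule cINF_greatest)
    show "couplings \<alpha> \<beta> \<noteq> {}" using dW_facts[OF assms] by auto
    fix P assume P: "P \<in> couplings \<alpha> \<beta>"
    have "ot_objective \<epsilon> D P = ot_objective \<epsilon> D' P + (\<Sum>i\<in>UNIV. \<Sum>j\<in>UNIV. P i j * (D i j - D' i j))"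
      unfolding ot_objective_def by (simp add: algebra_simps sum.distrib sum_subtractf)
    then show "dW \<epsilon> \<alpha> \<beta> D - maxnorm (\<lambda>i j. D i j - D' i j) \<le> ot_objective \<epsilon> D' P"
      using dW_facts(3)[OF assms P, of D] coupling_lin[OF P assms(1), of "\<lambda>i j. D i j - D' i j"] by linarith
  qed
  then show ?thesis by linarith
qed

lemma prob_le1: "is_prob \<alpha> \<Longrightarrow> \<alpha> i \<le> 1"
  unfolding is_prob_def using member_le_sum[of i UNIV \<alpha>] by auto

lemma xlnx: "(x::real) \<le> 1 \<Longrightarrow> 0 \<le> x \<Longrightarrow> x * ln x \<le> 0"
  by (cases "x = 0") (auto intro!: mult_nonneg_nonpos)

lemma dW_upper:
  fixes \<alpha> :: "'x::finite \<Rightarrow> real" and \<beta> :: "'y::finite \<Rightarrow> real"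
  assumes "is_prob \<alpha>" "is_prob \<beta>" "\<epsilon> \<ge> 0"
  shows "dW \<epsilon> \<alpha> \<beta> D \<le> maxnorm D"
proof -
  let ?P = "\<lambda>i j. \<alpha> i * \<beta> j"
  have P: "?P \<in> couplings \<alpha> \<beta>" by (rule prod_coupling[OF assms(1,2)])
  have a1: "\<And>i. \<alpha> i \<le> 1" "\<And>i. \<alpha> i \<ge> 0"
    using assms(1) prob_le1 unfolding is_prob_def by auto
  have b1: "\<And>i. \<beta> i \<le> 1" "\<And>i. \<beta> i \<ge> 0"
    using assms(2) prob_le1 unfolding is_prob_def by auto
  have t: "?P i j * ln (?P i j) \<le> 0" for i j
  proof -
    have "?P i j \<le> 1" "?P i j \<ge> 0" using a1 b1 by (auto intro: mult_le_one)
    then show ?thesis by (rule xlnx)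
  qed
  have "(\<Sum>i\<in>UNIV. \<Sum>j\<in>UNIV. ?P i j * ln (?P i j)) \<le> 0"
    using t by (intro sum_nonpos) auto
  then have "\<epsilon> * (\<Sum>i\<in>UNIV. \<Sum>j\<in>UNIV. ?P i j * ln (?P i j)) \<le> 0"
    using assms(3) by (simp add: mult_nonneg_nonpos)
  then have "ot_objective \<epsilon> D ?P \<le> maxnorm D"
    using coupling_lin[OF P assms(1), of D] unfolding ot_objective_def by linarith
  then show ?thesis using dW_facts(3)[OF assms P, of D] by linarith
qed

lemma dW_lower:
  fixes \<alpha> :: "'x::finite \<Rightarrow> real" and \<beta> :: "'y::finite \<Rightarrow> real"
  assumes "is_prob \<alpha>" "is_prob \<beta>" "\<epsilon> \<ge> 0" "\<And>i j. D i j \<ge> 0"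
  shows "dW \<epsilon> \<alpha> \<beta> D \<ge> - \<epsilon> * ln (real (CARD('x) * CARD('y)))"
  unfolding dW_def
proof (rule cINF_greatest)
  show "couplings \<alpha> \<beta> \<noteq> {}" using dW_facts[OF assms(1-3)] by auto
  fix P assume P: "P \<in> couplings \<alpha> \<beta>"
  have P0: "\<And>i j. P i j \<ge> 0" using P unfolding couplings_def by auto
  have "(\<Sum>i\<in>UNIV. \<Sum>j\<in>UNIV. P i j * D i j) \<ge> 0"
    using P0 assms(4) by (intro sum_nonneg) auto
  moreover have "\<epsilon> * (\<Sum>i\<in>UNIV. \<Sum>j\<in>UNIV. P i j * ln (P i j)) \<ge> \<epsilon> * (- ln (real (CARD('x) * CARD('y))))"
    using coupling_ent[OF P assms(1)] assms(3) by (intro mult_left_mono) auto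
  ultimately show "- \<epsilon> * ln (real (CARD('x) * CARD('y))) \<le> ot_objective \<epsilon> D P"
    unfolding ot_objective_def by simp
qed

lemma maxnorm_swap: "maxnorm (\<lambda>i j. A i j - B i j) = maxnorm (\<lambda>i j. B i j - A i j)"
proof (intro antisym maxnorm_le)
  fix i j
  show "\<bar>A i j - B i j\<bar> \<le> maxnorm (\<lambda>i j. B i j - A i j)"
    using maxnorm_ge[of "\<lambda>i j. B i j - A i j" i j] abs_minus_commute[of "A i j" "B i j"] by simp
  show "\<bar>B i j - A i j\<bar> \<le> maxnorm (\<lambda>i j. A i j - B i j)"
    using maxnorm_ge[of "\<lambda>i j. A i j - B i j" i j] abs_minus_commute[of "A i j" "B i j"] by simp
qed

lemma geo_tail:
  fixes r :: real
  shows "(1 - r) * (\<Sum>l\<in>{k..<k+d}. r ^ l) = r ^ k - r ^ (k + d)"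
proof (induction d)
  case 0 then show ?case by simp
next
  case (Suc d)
  have "(1 - r) * (\<Sum>l\<in>{k..<k+Suc d}. r ^ l) = (1 - r) * (\<Sum>l\<in>{k..<k+d}. r ^ l) + (1 - r) * r ^ (k + d)"
    by (simp add: distrib_left)
  also have "\<dots> = r ^ k - r ^ (k + Suc d)" using Suc.IH by (simp add: algebra_simps)
  finally show ?case .
qed

theorem proposition37:
  fixes mX :: "'x::finite \<Rightarrow> 'x \<Rightarrow> real" and mY :: "'y::finite \<Rightarrow> 'y \<Rightarrow> real"
    and C :: "'x \<Rightarrow> 'y \<Rightarrow> real" and \<delta> \<epsilon> :: real
  assumes "\<And>i. is_prob (mX i)" and "\<And>j. is_prob (mY j)"
    and "\<And>i j. C i j \<ge> 0"
    and "0 < \<delta>" and "\<delta> \<le> 1" and "\<epsilon> \<ge> 0"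
  shows "\<exists>Cinf. wl_update \<epsilon> \<delta> mX mY C Cinf = Cinf
           \<and> (\<forall>D. wl_update \<epsilon> \<delta> mX mY C D = D \<longrightarrow> D = Cinf)
           \<and> (\<lambda>k. (wl_update \<epsilon> \<delta> mX mY C ^^ k) C) \<longlonglongrightarrow> Cinf
           \<and> (\<forall>k. maxnorm (\<lambda>i j. (wl_update \<epsilon> \<delta> mX mY C ^^ k) C i j - Cinf i j)
                 \<le> (1 - \<delta>) ^ k / \<delta> * (2 * maxnorm C + \<epsilon> * ln (real (CARD('x) * CARD('y)))))"
proof -
  define T where "T = wl_update \<epsilon> \<delta> mX mY C"
  define u where "u = (\<lambda>k. (T ^^ k) C)" 
  define r where "r = 1 - \<delta>"
  define K where "K = ln (real (CARD('x) * CARD('y)))"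
  define B where "B = 2 * maxnorm C + \<epsilon> * K"
  have r0: "0 \<le> r" and r1: "r < 1" using assms(4,5) by (auto simp: r_def)
  have K0: "K \<ge> 0" unfolding K_def
  proof (intro ln_ge_zero)
    have "0 < CARD('x)" "0 < CARD('y)" by simp_all
    then have "1 \<le> CARD('x) * CARD('y)" by (simp add: Suc_le_eq)
    then show "1 \<le> real (CARD('x) * CARD('y))" by (metis of_nat_1 of_nat_le_iff)
  qed
  have uS: "u (Suc k) = T (u k)" for k by (simp add: u_def)
  have contr: "maxnorm (\<lambda>i j. T D i j - T D' i j) \<le> r * maxnorm (\<lambda>i j. D i j - D' i j)" for D D'
  proof (rule maxnorm_le)
    fix i j
    have a: "dW \<epsilon> (mX i) (mY j) D \<le> dW \<epsilon> (mX i) (mY j) D' + maxnorm (\<lambda>i j. D i j - D' i j)"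
      by (rule dW_lip[OF assms(1,2,6)])
    have b: "dW \<epsilon> (mX i) (mY j) D' \<le> dW \<epsilon> (mX i) (mY j) D + maxnorm (\<lambda>i j. D i j - D' i j)"
      using dW_lip[OF assms(1,2,6), of i j D' D] maxnorm_swap[of D' D] by simp
    have "T D i j - T D' i j = r * (dW \<epsilon> (mX i) (mY j) D - dW \<epsilon> (mX i) (mY j) D')"
      by (simp add: T_def wl_update_def r_def algebra_simps)
    then have "\<bar>T D i j - T D' i j\<bar> = r * \<bar>dW \<epsilon> (mX i) (mY j) D - dW \<epsilon> (mX i) (mY j) D'\<bar>"
      using r0 by (simp add: abs_mult)
    also have "\<dots> \<le> r * maxnorm (\<lambda>i j. D i j - D' i j)"
      using a b r0 by (intro mult_left_mono) auto
    finally show "\<bar>T D i j - T D' i j\<bar> \<le> r * maxnorm (\<lambda>i j. D i j - D' i j)" .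
  qed
  define d0 where "d0 = maxnorm (\<lambda>i j. u 1 i j - u 0 i j)"
  have d0B: "d0 \<le> B" unfolding d0_def
  proof (rule maxnorm_le)
    fix i j
    have up: "dW \<epsilon> (mX i) (mY j) C \<le> maxnorm C" by (rule dW_upper[OF assms(1,2,6)])
    have lo: "dW \<epsilon> (mX i) (mY j) C \<ge> - \<epsilon> * K" unfolding K_def by (rule dW_lower[OF assms(1,2,6,3)])
    have c: "0 \<le> C i j" "C i j \<le> maxnorm C" using assms(3) maxnorm_ge[of C i j] by auto
    have e: "\<epsilon> * K \<ge> 0" using K0 assms(6) by simp
    have "u 1 i j - u 0 i j = r * (dW \<epsilon> (mX i) (mY j) C - C i j)"
      by (simp add: u_def T_def wl_update_def r_def algebra_simps)
    then have "\<bar>u 1 i j - u 0 i j\<bar> = r * \<bar>dW \<epsilon> (mX i) (mY j) C - C i j\<bar>" using r0 by (simp add: abs_mult)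
    also have "\<dots> \<le> 1 * \<bar>dW \<epsilon> (mX i) (mY j) C - C i j\<bar>" using r1 by (intro mult_right_mono) auto
    also have "\<dots> \<le> B" using up lo c e unfolding B_def by auto
    finally show "\<bar>u 1 i j - u 0 i j\<bar> \<le> B" .
  qed
  have step: "maxnorm (\<lambda>i j. u (Suc k) i j - u k i j) \<le> r ^ k * d0" for k
  proof (induction k)
    case 0 then show ?case by (simp add: d0_def)
  next
    case (Suc k)
    have "maxnorm (\<lambda>i j. u (Suc (Suc k)) i j - u (Suc k) i j) \<le> r * maxnorm (\<lambda>i j. u (Suc k) i j - u k i j)"
      unfolding uS[of "Suc k"] uS[of k] by (rule contr)
    also have "\<dots> \<le> r * (r ^ k * d0)" using Suc r0 by (intro mult_left_mono) auto
    finally show ?case by simp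
  qed
  have d00: "d0 \<ge> 0" unfolding d0_def by (rule maxnorm_nonneg)
  define f where "f i j l = u (Suc l) i j - u l i j" for i j l
  have fb: "\<bar>f i j l\<bar> \<le> r ^ l * d0" for i j l
    using maxnorm_ge[of "\<lambda>i j. u (Suc l) i j - u l i j" i j] step[of l] by (simp add: f_def)
  have sg: "summable (\<lambda>l. r ^ l * d0)"
    using r0 r1 by (intro summable_mult2 summable_geometric) auto
  have sf: "summable (f i j)" for i j
    by (rule summable_comparison_test[OF _ sg]) (use fb in auto)
  define L where "L i j = C i j + suminf (f i j)" for i j
  have ut: "u k i j = C i j + (\<Sum>l<k. f i j l)" for k i j
  proof -
    have "(\<Sum>l<k. f i j l) = u k i j - u 0 i j" unfolding f_def by (rule sum_lessThan_telescope)
    then show ?thesis by (simp add: u_def)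
  qed
  have ulim: "(\<lambda>k. u k i j) \<longlonglongrightarrow> L i j" for i j
    unfolding ut L_def by (intro tendsto_add tendsto_const summable_LIMSEQ sf)
  have tail: "\<bar>u m i j - u k i j\<bar> \<le> r ^ k * d0 / \<delta>" if "k \<le> m" for i j k m
  proof -
    define d where "d = m - k"
    have m: "m = k + d" using that by (simp add: d_def)
    have eq: "u m i j - u k i j = (\<Sum>l\<in>{k..<m}. f i j l)"
    proof -
      have "(\<Sum>l<m. f i j l) = (\<Sum>l<k. f i j l) + (\<Sum>l\<in>{k..<m}. f i j l)"
        using that by (simp add: lessThan_atLeast0 sum.atLeastLessThan_concat)
      then show ?thesis by (simp add: ut)
    qed
    then have "\<bar>u m i j - u k i j\<bar> \<le> (\<Sum>l\<in>{k..<m}. r ^ l * d0)"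
    proof -
      have "\<bar>sum (f i j) {k..<m}\<bar> \<le> (\<Sum>l\<in>{k..<m}. r ^ l * d0)"
        by (rule order_trans[OF sum_abs sum_mono]) (rule fb)
      then show "\<bar>u m i j - u k i j\<bar> \<le> (\<Sum>l\<in>{k..<m}. r ^ l * d0)" using eq by simp
    qed
    also have "\<dots> = (r ^ k - r ^ m) * d0 / \<delta>"
    proof -
      have dr: "1 - r = \<delta>" by (simp add: r_def)
      have g: "\<delta> * (\<Sum>l\<in>{k..<m}. r ^ l) = r ^ k - r ^ m"
        using geo_tail[of r k d] unfolding m dr .
      have "(\<Sum>l\<in>{k..<m}. r ^ l) = (r ^ k - r ^ m) / \<delta>"
        using assms(4) unfolding g[symmetric] by simp
      then show ?thesis by (simp add: sum_distrib_right[symmetric])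
    qed
    also have "\<dots> \<le> r ^ k * d0 / \<delta>"
      using r0 d00 assms(4) by (intro divide_right_mono mult_right_mono) auto
    finally show ?thesis .
  qed
  have bnd: "\<bar>L i j - u k i j\<bar> \<le> r ^ k * d0 / \<delta>" for i j k
  proof (rule tendsto_upperbound)
    show "((\<lambda>m. \<bar>u m i j - u k i j\<bar>) \<longlongrightarrow> \<bar>L i j - u k i j\<bar>) sequentially"
      by (intro tendsto_intros ulim)
    show "\<forall>\<^sub>F m in sequentially. \<bar>u m i j - u k i j\<bar> \<le> r ^ k * d0 / \<delta>"
      by (rule eventually_mono[OF eventually_ge_at_top[of k]]) (rule tail)
  qed simp
  have nb: "maxnorm (\<lambda>i j. u k i j - L i j) \<le> r ^ k * d0 / \<delta>" for k
  proof (rule maxnorm_le)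
    fix i j show "\<bar>u k i j - L i j\<bar> \<le> r ^ k * d0 / \<delta>"
      using bnd[of i j k] abs_minus_commute[of "u k i j" "L i j"] by simp
  qed
  have fixL: "T L = L"
  proof (intro ext)
    fix i j
    have "(\<lambda>k. u (Suc k) i j - T L i j) \<longlonglongrightarrow> 0"
    proof (rule Lim_null_comparison)
      show "\<forall>\<^sub>F k in sequentially. norm (u (Suc k) i j - T L i j) \<le> r * (r ^ k * d0 / \<delta>)"
      proof (intro always_eventually allI)
        fix k
        have "norm (u (Suc k) i j - T L i j) \<le> maxnorm (\<lambda>i j. T (u k) i j - T L i j)"
          using maxnorm_ge[of "\<lambda>i j. T (u k) i j - T L i j" i j] by (simp add: uS)
        also have "\<dots> \<le> r * maxnorm (\<lambda>i j. u k i j - L i j)" by (rule contr)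
        also have "\<dots> \<le> r * (r ^ k * d0 / \<delta>)" using nb r0 by (intro mult_left_mono) auto
        finally show "norm (u (Suc k) i j - T L i j) \<le> r * (r ^ k * d0 / \<delta>)" .
      qed
      show "(\<lambda>k. r * (r ^ k * d0 / \<delta>)) \<longlonglongrightarrow> 0"
        using r0 r1 by (intro tendsto_mult_right_zero tendsto_divide_zero tendsto_mult_left_zero LIMSEQ_power_zero) auto
    qed
    then have "(\<lambda>k. u (Suc k) i j) \<longlonglongrightarrow> T L i j"
      using Lim_null[symmetric] by (simp add: LIM_zero_iff)
    moreover have "(\<lambda>k. u (Suc k) i j) \<longlonglongrightarrow> L i j" using ulim by (rule LIMSEQ_Suc)
    ultimately show "T L i j = L i j" by (rule LIMSEQ_unique)
  qed
  have uniq: "D = L" if "T D = D" for D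
  proof -
    have "maxnorm (\<lambda>i j. D i j - L i j) \<le> r * maxnorm (\<lambda>i j. D i j - L i j)"
      using contr[of D L] that fixL by simp
    then have z: "maxnorm (\<lambda>i j. D i j - L i j) \<le> 0"
      using r1 maxnorm_nonneg[of "\<lambda>i j. D i j - L i j"] by (metis mult_le_cancel_right1 not_le)
    show ?thesis
    proof (intro ext)
      fix i j show "D i j = L i j" using maxnorm_ge[of "\<lambda>i j. D i j - L i j" i j] z by simp
    qed
  qed
  have conv: "u \<longlonglongrightarrow> L"
    by (intro fun_tendsto ulim)
  have final: "maxnorm (\<lambda>i j. u k i j - L i j) \<le> r ^ k / \<delta> * B" for k
  proof -
    have "r ^ k * d0 / \<delta> \<le> r ^ k * B / \<delta>"
      using d0B r0 assms(4) by (intro divide_right_mono mult_left_mono) auto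
    then show ?thesis using nb[of k] by simp
  qed
  show ?thesis unfolding T_def[symmetric]
  proof (rule exI[of _ L])
    have "T L = L \<and> (\<forall>D. T D = D \<longrightarrow> D = L) \<and> u \<longlonglongrightarrow> L \<and> (\<forall>k. maxnorm (\<lambda>i j. u k i j - L i j) \<le> r ^ k / \<delta> * B)"
      using fixL uniq conv final by blast
    then show "T L = L \<and> (\<forall>D. T D = D \<longrightarrow> D = L) \<and> (\<lambda>k. (T ^^ k) C) \<longlonglongrightarrow> L \<and> (\<forall>k. maxnorm (\<lambda>i j. (T ^^ k) C i j - L i j) \<le> (1 - \<delta>) ^ k / \<delta> * (2 * maxnorm C + \<epsilon> * ln (real (CARD('x) * CARD('y)))))"
      unfolding u_def r_def B_def K_def by simp
  qed
qed

end
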